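(* Let $G$ be a partial cube in which every convex cycle is a $4$-cycle, and let $P=v_0v_1\cdots v_l$ ($l\geqslant 1$) be a path in $G$. If $P$ is of type-I, then $P$ is a shortest $v_0,v_l$-path (geodesic) in $G$.
   Context: A partial cube is a connected graph isomorphic to an isometric subgraph of a hypercube. A subgraph $H$ is convex if for all $u,v\in V(H)$ every shortest $u,v$-path of $G$ lies in $H$; a convex cycle is a cycle that is a convex subgraph. The Djoković–Winkler relation $\Theta$ on edges: $uv\,\Theta\,xy$ iff $d(u,x)+d(v,y)\neq d(u,y)+d(v,x)$; in a partial cube it is an equivalence relation, and $F_e$ denotes the $\Theta$-class of edge $e$. For a vertex $v$, $\mathcal{F}(v)=\{F_e: e \text{ is an edge incident with } v\}$. With $e_i=v_{i-1}v_i$ ($1\leqslant i\leqslant l$), the path $P=v_0v_1\cdots v_l$ ($l\geqslant 1$) is of type-I if $\mathcal{F}(v_0)\setminus\mathcal{F}(v_1)\neq\emptyset$, $\mathcal{F}(v_l)\setminus\mathcal{F}(v_{l-1})\neq\emptyset$, and for every $1\leqslant i\leqslant l-1$: $F_{e_{i+1}}\notin\mathcal{F}(v_{i-1})$ and $F_{e_i}\notin\mathcal{F}(v_{i+1})$. *)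

theory Defs
  imports Main
begin

record 'a graph =
  verts :: "'a set"
  edges :: "'a set set"

definition wf_graph :: "'a graph \<Rightarrow> bool" where
  "wf_graph G \<longleftrightarrow> finite (verts G) \<and>
     (\<forall>e\<in>edges G. \<exists>u v. u \<noteq> v \<and> u \<in> verts G \<and> v \<in> verts G \<and> e = {u, v})"

definition adj :: "'a graph \<Rightarrow> 'a \<Rightarrow> 'a \<Rightarrow> bool" where
  "adj G u v \<longleftrightarrow> u \<noteq> v \<and> {u, v} \<in> edges G"

definition walk :: "'a graph \<Rightarrow> 'a list \<Rightarrow> bool" where
  "walk G xs \<longleftrightarrow> xs \<noteq> [] \<and> set xs \<subseteq> verts G \<and>
     (\<forall>i. Suc i < length xs \<longrightarrow> adj G (xs ! i) (xs ! Suc i))"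

definition gpath :: "'a graph \<Rightarrow> 'a list \<Rightarrow> bool" where
  "gpath G xs \<longleftrightarrow> walk G xs \<and> distinct xs"

definition connected_graph :: "'a graph \<Rightarrow> bool" where
  "connected_graph G \<longleftrightarrow> verts G \<noteq> {} \<and>
     (\<forall>u\<in>verts G. \<forall>v\<in>verts G. \<exists>xs. walk G xs \<and> hd xs = u \<and> last xs = v)"

definition gdist :: "'a graph \<Rightarrow> 'a \<Rightarrow> 'a \<Rightarrow> nat" where
  "gdist G u v = (LEAST n. \<exists>xs. walk G xs \<and> hd xs = u \<and> last xs = v \<and> length xs - 1 = n)"

definition shortest_path :: "'a graph \<Rightarrow> 'a \<Rightarrow> 'a \<Rightarrow> 'a list \<Rightarrow> bool" where
  "shortest_path G u v xs \<longleftrightarrow> gpath G xs \<and> hd xs = u \<and> last xs = v \<and>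
     length xs - 1 = gdist G u v"

definition subgraph :: "'a graph \<Rightarrow> 'a graph \<Rightarrow> bool" where
  "subgraph H G \<longleftrightarrow> wf_graph H \<and> verts H \<subseteq> verts G \<and> edges H \<subseteq> edges G"

definition isometric_subgraph :: "'a graph \<Rightarrow> 'a graph \<Rightarrow> bool" where
  "isometric_subgraph H G \<longleftrightarrow> subgraph H G \<and>
     (\<forall>u\<in>verts H. \<forall>v\<in>verts H. gdist H u v = gdist G u v)"

definition isomorphic :: "'a graph \<Rightarrow> 'b graph \<Rightarrow> bool" where
  "isomorphic G H \<longleftrightarrow> (\<exists>f. bij_betw f (verts G) (verts H) \<and>
     (\<forall>u\<in>verts G. \<forall>v\<in>verts G. adj G u v \<longleftrightarrow> adj H (f u) (f v)))"

text \<open>The hypercube Q_n: vertices are subsets of {0..<n} (i.e. 0/1 vectors),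
  adjacent iff they differ in exactly one coordinate.\<close>
definition hypercube :: "nat \<Rightarrow> nat set graph" where
  "hypercube n = \<lparr> verts = Pow {0..<n},
     edges = {{S, T} | S T. S \<subseteq> {0..<n} \<and> T \<subseteq> {0..<n} \<and> card ((S - T) \<union> (T - S)) = 1} \<rparr>"

definition partial_cube :: "'a graph \<Rightarrow> bool" where
  "partial_cube G \<longleftrightarrow> wf_graph G \<and> connected_graph G \<and>
     (\<exists>n H. isometric_subgraph H (hypercube n) \<and> isomorphic G H)"

definition convex_subgraph :: "'a graph \<Rightarrow> 'a graph \<Rightarrow> bool" where
  "convex_subgraph H G \<longleftrightarrow> subgraph H G \<and>
     (\<forall>u\<in>verts H. \<forall>v\<in>verts H. \<forall>xs. shortest_path G u v xs \<longrightarrow>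
        set xs \<subseteq> verts H \<and> (\<forall>i. Suc i < length xs \<longrightarrow> {xs ! i, xs ! Suc i} \<in> edges H))"

definition is_cycle :: "'a graph \<Rightarrow> 'a list \<Rightarrow> bool" where
  "is_cycle G vs \<longleftrightarrow> length vs \<ge> 3 \<and> distinct vs \<and> set vs \<subseteq> verts G \<and>
     (\<forall>i < length vs. adj G (vs ! i) (vs ! ((Suc i) mod length vs)))"

definition cycle_graph :: "'a list \<Rightarrow> 'a graph" where
  "cycle_graph vs = \<lparr> verts = set vs,
     edges = {{vs ! i, vs ! ((Suc i) mod length vs)} | i. i < length vs} \<rparr>"

definition convex_cycle :: "'a graph \<Rightarrow> 'a list \<Rightarrow> bool" where
  "convex_cycle G vs \<longleftrightarrow> is_cycle G vs \<and> convex_subgraph (cycle_graph vs) G"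

definition Theta :: "'a graph \<Rightarrow> 'a \<Rightarrow> 'a \<Rightarrow> 'a \<Rightarrow> 'a \<Rightarrow> bool" where
  "Theta G u v x y \<longleftrightarrow>
     gdist G u x + gdist G v y \<noteq> gdist G u y + gdist G v x"

definition Theta_class :: "'a graph \<Rightarrow> 'a \<Rightarrow> 'a \<Rightarrow> 'a set set" where
  "Theta_class G u v = {{x, y} | x y. adj G x y \<and> Theta G u v x y}"

definition Fv :: "'a graph \<Rightarrow> 'a \<Rightarrow> 'a set set set" where
  "Fv G v = {Theta_class G v w | w. adj G v w}"

definition type_I :: "'a graph \<Rightarrow> 'a list \<Rightarrow> bool" where
  "type_I G P \<longleftrightarrow> (let l = length P - 1 in
     Fv G (P ! 0) - Fv G (P ! 1) \<noteq> {} \<and>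
     Fv G (P ! l) - Fv G (P ! (l - 1)) \<noteq> {} \<and>
     (\<forall>i. 1 \<le> i \<and> i \<le> l - 1 \<longrightarrow>
        Theta_class G (P ! i) (P ! (i + 1)) \<notin> Fv G (P ! (i - 1)) \<and>
        Theta_class G (P ! (i - 1)) (P ! i) \<notin> Fv G (P ! (i + 1))))"

end

theory Submission
  imports Defs
begin

definition sdiff :: "'b set \<Rightarrow> 'b set \<Rightarrow> 'b set" where
  "sdiff A B = (A - B) \<union> (B - A)"

lemma mem_sdiff[simp]: "x \<in> sdiff A B \<longleftrightarrow> (x \<in> A) \<noteq> (x \<in> B)"
  unfolding sdiff_def by auto

lemma sdiff_comm: "sdiff A B = sdiff B A" by auto

lemma sdiff_cancel: "sdiff (sdiff u X) (sdiff u Y) = sdiff X Y" by auto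
lemma sdiff_assoc: "sdiff (sdiff A B) C = sdiff A (sdiff B C)" by auto
lemma sdiff_invol: "sdiff u (sdiff w u) = w" by auto
lemma sdiff_empty[simp]: "sdiff A {} = A" "sdiff {} A = A" by auto
lemma sdiff_self[simp]: "sdiff A A = {}" by auto

lemma finite_sdiff[simp]: "finite A \<Longrightarrow> finite B \<Longrightarrow> finite (sdiff A B)"
  unfolding sdiff_def by auto

lemma card_sdiff_single:
  assumes "finite D"
  shows "card (sdiff D {e}) = (if e \<in> D then card D - 1 else Suc (card D))"
proof (cases "e \<in> D")
  case True
  then have "sdiff D {e} = D - {e}" by auto
  then show ?thesis using True assms by simp
next
  case False
  then have "sdiff D {e} = insert e D" by auto
  then show ?thesis using False assms by simp
qed

lemma sdiff_tri:
  assumes "finite A" "finite B" "finite C"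
  shows "card (sdiff A C) \<le> card (sdiff A B) + card (sdiff B C)"
proof -
  have "sdiff A C \<subseteq> sdiff A B \<union> sdiff B C" by auto
  then have "card (sdiff A C) \<le> card (sdiff A B \<union> sdiff B C)"
    by (intro card_mono) (use assms in auto)
  also have "\<dots> \<le> card (sdiff A B) + card (sdiff B C)" by (rule card_Un_le)
  finally show ?thesis .
qed

lemma sdiff_between:
  assumes "finite A" "finite B" "finite N"
    and "card (sdiff A N) + card (sdiff N B) \<le> card (sdiff A B)"
  shows "(z \<in> N \<longrightarrow> z \<in> A \<or> z \<in> B) \<and> (z \<in> A \<longrightarrow> z \<in> B \<longrightarrow> z \<in> N)"
proof (rule ccontr)
  assume c: "\<not> ?thesis"
  define X where "X = sdiff A N"
  define Y where "Y = sdiff N B"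
  have fX: "finite X" "finite Y" using assms unfolding X_def Y_def by auto
  have "z \<in> X \<inter> Y" using c unfolding X_def Y_def by auto
  then have "card (X \<inter> Y) > 0" using fX by (auto simp: card_gt_0_iff)
  moreover have "sdiff A B \<subseteq> X \<union> Y" unfolding X_def Y_def by auto
  then have "card (sdiff A B) \<le> card (X \<union> Y)" using fX by (intro card_mono) auto
  moreover have "card X + card Y = card (X \<union> Y) + card (X \<inter> Y)"
    using fX by (rule card_Un_Int)
  ultimately show False using assms(4) unfolding X_def Y_def by linarith
qed

lemma card_ge2: "finite X \<Longrightarrow> a \<in> X \<Longrightarrow> b \<in> X \<Longrightarrow> a \<noteq> b \<Longrightarrow> 2 \<le> card X"
  by (metis card_2_iff card_mono empty_subsetI insert_subset)

lemma img_sdiff: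
  assumes "inj_on s {..<m}" "A \<subseteq> {..<m}" "B \<subseteq> {..<m}"
  shows "sdiff (s ` A) (s ` B) = s ` (sdiff A B)"
  using assms unfolding sdiff_def inj_on_def by blast

lemma card_img_sdiff:
  assumes "inj_on s {..<m}" "A \<subseteq> {..<m}" "B \<subseteq> {..<m}"
  shows "card (sdiff (s ` A) (s ` B)) = card (sdiff A B)"
proof -
  have "sdiff A B \<subseteq> {..<m}" using assms by auto
  then have "inj_on s (sdiff A B)" using assms(1) inj_on_subset by blast
  then show ?thesis using img_sdiff[OF assms] by (simp add: card_image)
qed

lemma sd_lt: "sdiff {..<i} {..<j} = {min i j..<max i (j::nat)}" by auto
lemma sd_ge: "sdiff {i..<m} {j..<m} = {min i j..<min m (max i (j::nat))}" by auto
lemma sd_ge_lt: "j \<le> m \<Longrightarrow> sdiff {j..<m} {..<m} = {..<(j::nat)}" by auto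

definition Bs :: "'b set \<Rightarrow> (nat \<Rightarrow> 'b) \<Rightarrow> nat \<Rightarrow> 'b set" where
  "Bs u s t = sdiff u (s ` {..<t})"
definition Ds :: "'b set \<Rightarrow> (nat \<Rightarrow> 'b) \<Rightarrow> nat \<Rightarrow> nat \<Rightarrow> 'b set" where
  "Ds u s m j = sdiff u (s ` {j..<m})"

lemma rel_Bs: "sdiff (Bs u s t) u = s ` {..<t}" unfolding Bs_def by auto
lemma rel_Ds: "sdiff (Ds u s m j) u = s ` {j..<m}" unfolding Ds_def by auto
lemma Bs0[simp]: "Bs u s 0 = u" unfolding Bs_def by simp

lemma injD_lt: "inj_on s {..<m} \<Longrightarrow> a < m \<Longrightarrow> b < m \<Longrightarrow> s a = s b \<Longrightarrow> a = b"
  by (auto simp: inj_on_def)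

lemma sdiff_ins: "a \<notin> X \<Longrightarrow> sdiff u (insert a X) = sdiff (sdiff u X) {a}"
  by auto

lemma BB_card:
  assumes "inj_on s {..<m}" "i \<le> m" "j \<le> m"
  shows "card (sdiff (Bs u s i) (Bs u s j)) = (if i \<le> j then j - i else i - j)"
proof -
  have "card (sdiff (Bs u s i) (Bs u s j)) = card (sdiff (s ` {..<i}) (s ` {..<j}))"
    unfolding Bs_def sdiff_cancel ..
  also have "\<dots> = card (sdiff {..<i} {..<j})"
    by (rule card_img_sdiff[OF assms(1)]) (use assms in auto)
  also have "\<dots> = (if i \<le> j then j - i else i - j)" unfolding sd_lt by auto
  finally show ?thesis .
qed

lemma DD_card:
  assumes "inj_on s {..<m}" "i \<le> m" "j \<le> m"
  shows "card (sdiff (Ds u s m i) (Ds u s m j)) = (if i \<le> j then j - i else i - j)"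
proof -
  have "card (sdiff (Ds u s m i) (Ds u s m j)) = card (sdiff (s ` {i..<m}) (s ` {j..<m}))"
    unfolding Ds_def sdiff_cancel ..
  also have "\<dots> = card (sdiff {i..<m} {j..<m})"
    by (rule card_img_sdiff[OF assms(1)]) (use assms in auto)
  also have "\<dots> = (if i \<le> j then j - i else i - j)" unfolding sd_ge using assms by auto
  finally show ?thesis .
qed

lemma DB0_card:
  assumes "inj_on s {..<m}" "j \<le> m"
  shows "card (sdiff (Ds u s m j) (Bs u s 0)) = m - j"
proof -
  have "sdiff (Ds u s m j) (Bs u s 0) = s ` {j..<m}" unfolding Ds_def by auto
  moreover have "inj_on s {j..<m}" using assms(1) by (rule inj_on_subset) auto
  ultimately show ?thesis by (simp add: card_image)
qed

lemma DBm_card: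
  assumes "inj_on s {..<m}" "j \<le> m"
  shows "card (sdiff (Ds u s m j) (Bs u s m)) = j"
proof -
  have "card (sdiff (Ds u s m j) (Bs u s m)) = card (sdiff (s ` {j..<m}) (s ` {..<m}))"
    unfolding Bs_def Ds_def sdiff_cancel ..
  also have "\<dots> = card (sdiff {j..<m} {..<m})"
    by (rule card_img_sdiff[OF assms(1)]) auto
  also have "\<dots> = j" using sd_ge_lt[OF assms(2)] by simp
  finally show ?thesis .
qed

lemma DB2_card:
  assumes "inj_on s {..<m}" "1 \<le> r" "r < m" "1 \<le> j" "j < m"
  shows "2 \<le> card (sdiff (Ds u s m j) (Bs u s r))"
proof -
  have "card (sdiff (Ds u s m j) (Bs u s r)) = card (sdiff (s ` {j..<m}) (s ` {..<r}))"
    unfolding Bs_def Ds_def sdiff_cancel ..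
  also have "\<dots> = card (sdiff {j..<m} {..<r})"
    by (rule card_img_sdiff[OF assms(1)]) (use assms in auto)
  also have "2 \<le> card (sdiff {j..<m} {..<r})"
    by (rule card_ge2[of _ 0 "m - 1"]) (use assms in auto)
  finally show ?thesis by simp
qed

lemma Bs_Suc:
  assumes "inj_on s {..<m}" "t < m"
  shows "Bs u s (Suc t) = sdiff (Bs u s t) {s t}"
proof -
  have "s t \<notin> s ` {..<t}"
  proof
    assume "s t \<in> s ` {..<t}"
    then obtain x where "x < t" "s t = s x" by auto
    then show False using injD_lt[OF assms(1), of t x] assms(2) by simp
  qed
  then show ?thesis unfolding Bs_def lessThan_Suc image_insert by (rule sdiff_ins)
qed

lemma Bs_shift:
  assumes "inj_on s {..<m}" "t < m"
  shows "Bs (Bs u s 1) (s \<circ> Suc) t = Bs u s (Suc t)"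
proof -
  have e: "s ` {..<Suc t} = insert (s 0) ((s \<circ> Suc) ` {..<t})"
    by (simp add: lessThan_Suc_eq_insert_0 image_image)
  have n: "s 0 \<notin> (s \<circ> Suc) ` {..<t}"
  proof
    assume "s 0 \<in> (s \<circ> Suc) ` {..<t}"
    then obtain x where "x < t" "s 0 = s (Suc x)" by auto
    then show False using injD_lt[OF assms(1), of 0 "Suc x"] assms(2) by simp
  qed
  have "s ` {..<1} = {s 0}" by auto
  then show ?thesis unfolding Bs_def e using sdiff_ins[OF n, of u] sdiff_assoc
    by (metis sdiff_comm)
qed

definition finV :: "'b set set \<Rightarrow> bool" where "finV V \<longleftrightarrow> (\<forall>w\<in>V. finite w)"
definition isoV :: "'b set set \<Rightarrow> bool" where
  "isoV V \<longleftrightarrow> (\<forall>a\<in>V. \<forall>b\<in>V. a \<noteq> b \<longrightarrow>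
     (\<exists>n\<in>V. card (sdiff a n) = 1 \<and> Suc (card (sdiff n b)) = card (sdiff a b)))"

definition chainok :: "'b set set \<Rightarrow> 'b set \<Rightarrow> (nat \<Rightarrow> 'b) \<Rightarrow> nat \<Rightarrow> bool" where
  "chainok V u s m \<longleftrightarrow> inj_on s {..<m} \<and> (\<forall>t\<le>m. Bs u s t \<in> V) \<and>
     (\<forall>t. 1 \<le> t \<and> t < m \<longrightarrow> sdiff (Bs u s (t-1)) {s t} \<notin> V)"

definition CS :: "'b set set \<Rightarrow> 'b set \<Rightarrow> (nat \<Rightarrow> 'b) \<Rightarrow> nat \<Rightarrow> bool" where
  "CS V u s m \<longleftrightarrow> 3 \<le> m \<and> inj_on s {..<m} \<and> (\<forall>t\<le>m. Bs u s t \<in> V) \<and>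
     (\<forall>j. 1 \<le> j \<and> j < m \<longrightarrow> Ds u s m j \<in> V) \<and>
     (\<forall>w\<in>V. sdiff w u \<subseteq> s ` {..<m} \<longrightarrow>
        (\<exists>t\<le>m. w = Bs u s t) \<or> (\<exists>j. 1 \<le> j \<and> j < m \<and> w = Ds u s m j)) \<and>
     (\<forall>t w. 1 \<le> t \<and> t < m \<and> w \<in> V \<and> sdiff w u \<subseteq> s ` {..<m} \<and>
        card (sdiff w (Bs u s t)) = 1 \<longrightarrow> w = Bs u s (t-1) \<or> w = Bs u s (Suc t))"

lemma sdiff_rel: "sdiff a b = sdiff (sdiff a u) (sdiff b u)" by auto

lemma dec_mem:
  assumes "finite A" "finite w" "Suc (card (sdiff (sdiff A {e}) w)) = card (sdiff A w)"
  shows "e \<in> sdiff A w"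
proof (rule ccontr)
  assume a: "e \<notin> sdiff A w"
  have "sdiff (sdiff A {e}) w = sdiff (sdiff A w) {e}" by auto
  then have "card (sdiff (sdiff A {e}) w) = Suc (card (sdiff A w))"
    using card_sdiff_single[of "sdiff A w" e] a assms(1,2) by simp
  then show False using assms(3) by simp
qed

lemma core:
  assumes fin: "finV V" and iso: "isoV V"
  shows "chainok V u s m \<Longrightarrow> (\<forall>w\<in>V. sdiff w u \<subseteq> s ` {..<m} \<longrightarrow> (\<exists>t\<le>m. w = Bs u s t))
           \<or> (\<exists>u' s' m'. CS V u' s' m')"
proof (induction m arbitrary: u s rule: less_induct)
  case (less m u s)
  have inj: "inj_on s {..<m}" and Bin: "\<And>t. t \<le> m \<Longrightarrow> Bs u s t \<in> V"
    and nsq: "\<And>t. 1 \<le> t \<Longrightarrow> t < m \<Longrightarrow> sdiff (Bs u s (t-1)) {s t} \<notin> V"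
    using less.prems unfolding chainok_def by auto
  have finw: "\<And>w. w \<in> V \<Longrightarrow> finite w" using fin unfolding finV_def by auto
  have smem: "\<And>p A. p < m \<Longrightarrow> A \<subseteq> {..<m} \<Longrightarrow> s p \<in> s ` A \<longleftrightarrow> p \<in> A"
    using inj by (simp add: inj_on_image_mem_iff)
  show ?case
  proof (cases "m = 0")
    case True
    have "w = Bs u s 0" if "sdiff w u \<subseteq> s ` {..<m}" for w
      using that True by (auto simp: Bs_def)
    then show ?thesis by (metis le0)
  next
    case False
    show ?thesis
    proof (rule ccontr)
      assume nc: "\<not> ?thesis"
      then have noCS: "\<not> (\<exists>u' s' m'. CS V u' s' m')" by auto
      from nc obtain x where xV: "x \<in> V" and xbox: "sdiff x u \<subseteq> s ` {..<m}"
        and xnB: "\<forall>t\<le>m. x \<noteq> Bs u s t" by auto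
      have ch1: "chainok V (Bs u s 1) (s \<circ> Suc) (m - 1)"
        unfolding chainok_def
      proof (intro conjI allI impI)
        show "inj_on (s \<circ> Suc) {..<m - 1}"
        proof (rule inj_onI)
          fix a b assume "a \<in> {..<m-1}" "b \<in> {..<m-1}" "(s \<circ> Suc) a = (s \<circ> Suc) b"
          then show "a = b" using injD_lt[OF inj, of "Suc a" "Suc b"] by auto
        qed
        fix t assume "t \<le> m - 1"
        then show "Bs (Bs u s 1) (s \<circ> Suc) t \<in> V"
          using Bs_shift[OF inj, of t u] Bin[of "Suc t"] False by auto
      next
        fix t assume t: "1 \<le> t \<and> t < m - 1"
        have "Bs (Bs u s 1) (s \<circ> Suc) (t - 1) = Bs u s t"
          using Bs_shift[OF inj, of "t-1" u] t by auto
        then show "sdiff (Bs (Bs u s 1) (s \<circ> Suc) (t - 1)) {(s \<circ> Suc) t} \<notin> V"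
        proof -
          have "Suc t < m" "1 \<le> Suc t" using t by auto
          then show ?thesis using nsq[of "Suc t"] \<open>Bs (Bs u s 1) (s \<circ> Suc) (t - 1) = Bs u s t\<close> by simp
        qed
      qed
      have IH1: "\<forall>w\<in>V. sdiff w (Bs u s 1) \<subseteq> (s \<circ> Suc) ` {..<m-1} \<longrightarrow>
                   (\<exists>t\<le>m-1. w = Bs (Bs u s 1) (s \<circ> Suc) t)"
        using less.IH[OF _ ch1] False noCS by (auto simp: comp_def)
      have F1: "\<exists>t\<le>m. w = Bs u s t"
        if th: "w \<in> V" "sdiff w u \<subseteq> s ` {..<m}" "s 0 \<in> sdiff w u" for w
      proof -
        have "sdiff w (Bs u s 1) \<subseteq> (s \<circ> Suc) ` {..<m-1}"
        proof
          fix z assume z: "z \<in> sdiff w (Bs u s 1)"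
          have "Bs u s 1 = sdiff u {s 0}" unfolding Bs_def by auto
          then have "z \<in> sdiff w u" "z \<noteq> s 0" using z th(3) by auto
          then have "z \<in> s ` {..<m}" using th(2) by blast
          then obtain p where p: "p < m" "z = s p" by blast
          then have "p \<noteq> 0" using \<open>z \<noteq> s 0\<close> by (metis gr0I)
          note p = p this
          then have "z = (s \<circ> Suc) (p - 1)" "p - 1 < m - 1" by auto
          then show "z \<in> (s \<circ> Suc) ` {..<m-1}" by blast
        qed
        then obtain t where "t \<le> m - 1" "w = Bs (Bs u s 1) (s \<circ> Suc) t"
          using IH1 th(1) by blast
        then show ?thesis using Bs_shift[OF inj, of t u] False
          by (intro exI[of _ "Suc t"]) auto
      qed
      have ch2: "chainok V u s (m - 1)"
        unfolding chainok_def using inj Bin nsq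
        by (auto intro: inj_on_subset)
      have IH2: "\<forall>w\<in>V. sdiff w u \<subseteq> s ` {..<m-1} \<longrightarrow> (\<exists>t\<le>m-1. w = Bs u s t)"
        using less.IH[OF _ ch2] False noCS by auto
      have F2: "\<exists>t\<le>m-1. w = Bs u s t"
        if th: "w \<in> V" "sdiff w u \<subseteq> s ` {..<m}" "s (m-1) \<notin> sdiff w u" for w
      proof -
        have "sdiff w u \<subseteq> s ` {..<m-1}"
        proof
          fix z assume z: "z \<in> sdiff w u"
          then have "z \<in> s ` {..<m}" using th(2) by blast
          then obtain p where p: "p < m" "z = s p" by blast
          then have "p \<noteq> m - 1" using th(3) z by auto
          then show "z \<in> s ` {..<m-1}" using p by auto
        qed
        then show ?thesis using IH2 th(1) by blast
      qed
      have m2: "2 \<le> m"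
      proof (rule ccontr)
        assume "\<not> 2 \<le> m"
        then have "m = 1" using False by auto
        have "\<exists>t\<le>m. x = Bs u s t"
        proof (cases "s 0 \<in> sdiff x u")
          case True
          then show ?thesis using F1[OF xV xbox] by blast
        next
          case False
          then obtain t where "t \<le> m-1" "x = Bs u s t" using F2[OF xV xbox] \<open>m = 1\<close> by auto
          then show ?thesis by (intro exI[of _ t]) auto
        qed
        then show False using xnB by blast
      qed
      have Deg: "n = Bs u s (t-1) \<or> n = Bs u s (Suc t)"
        if t: "1 \<le> t" "t < m" and n: "n \<in> V" "sdiff n u \<subseteq> s ` {..<m}"
          "card (sdiff n (Bs u s t)) = 1" for t n
      proof -
        have sd: "sdiff n (Bs u s t) = sdiff (sdiff n u) (s ` {..<t})"
          unfolding Bs_def by auto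
        have "\<exists>r\<le>m. n = Bs u s r"
        proof (cases "s 0 \<in> sdiff n u")
          case True
          then show ?thesis using F1 n by blast
        next
          case False
          have "s (m-1) \<notin> sdiff n u"
          proof
            assume a: "s (m-1) \<in> sdiff n u"
            have "s (m-1) \<notin> s ` {..<t}" using smem[of "m-1" "{..<t}"] t by auto
            then have i1: "s (m-1) \<in> sdiff n (Bs u s t)" using a sd by auto
            have "s 0 \<in> s ` {..<t}" using t by auto
            then have i2: "s 0 \<in> sdiff n (Bs u s t)" using False sd by auto
            have neq: "s 0 \<noteq> s (m-1)" using injD_lt[OF inj, of 0 "m-1"] m2 by auto
            have fn: "finite (sdiff n (Bs u s t))" using finw n(1) Bin t by auto
            have "2 \<le> card (sdiff n (Bs u s t))" by (rule card_ge2[OF fn i2 i1 neq])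
            then show False using n(3) by simp
          qed
          then obtain r where "r \<le> m-1" "n = Bs u s r" using F2[OF n(1,2)] by blast
          then show ?thesis by (intro exI[of _ r]) auto
        qed
        then obtain r where r: "r \<le> m" "n = Bs u s r" by blast
        then have "card (sdiff (Bs u s r) (Bs u s t)) = 1" using n(3) by simp
        then have "(if r \<le> t then t - r else r - t) = 1" using BB_card[OF inj r(1), of t u] t by simp
        then have "r = t - 1 \<or> r = Suc t" by (auto split: if_splits)
        then show ?thesis using r by auto
      qed
      define NB where "NB w \<longleftrightarrow> w \<in> V \<and> sdiff w u \<subseteq> s ` {..<m} \<and> (\<forall>t\<le>m. w \<noteq> Bs u s t)" for w
      have X1: "s 0 \<notin> sdiff w u \<and> s (m-1) \<in> sdiff w u" if "NB w" for w
      proof -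
        have wV: "w \<in> V" and wb: "sdiff w u \<subseteq> s ` {..<m}" and wn: "\<forall>t\<le>m. w \<noteq> Bs u s t"
          using that unfolding NB_def by auto
        have a: "s 0 \<notin> sdiff w u"
        proof
          assume "s 0 \<in> sdiff w u"
          from F1[OF wV wb this] show False using wn by blast
        qed
        have b: "s (m-1) \<in> sdiff w u"
        proof (rule ccontr)
          assume "s (m-1) \<notin> sdiff w u"
          from F2[OF wV wb this] obtain t where "t \<le> m-1" "w = Bs u s t" by blast
          then show False using wn by auto
        qed
        from a b show ?thesis by simp
      qed
      have Up: "s t \<in> sdiff w u"
        if w: "NB w" and t: "1 \<le> t" "t < m" "s (t-1) \<in> sdiff w u" for w t
      proof -
        have wV: "w \<in> V" and wbox: "sdiff w u \<subseteq> s ` {..<m}" and wn: "\<forall>t\<le>m. w \<noteq> Bs u s t"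
          using w unfolding NB_def by auto
        have wne: "Bs u s t \<noteq> w" using wn t(2) less_imp_le by blast
        have Bt: "Bs u s t \<in> V" using Bin t by simp
        obtain n where nV: "n \<in> V" and n1: "card (sdiff (Bs u s t) n) = 1"
          and n2: "Suc (card (sdiff n w)) = card (sdiff (Bs u s t) w)"
          using iso[unfolded isoV_def, rule_format, OF Bt wV wne] by blast
        have fins: "finite (Bs u s t)" "finite w" "finite n" using finw Bin t wV nV by auto
        have btw: "(z \<in> n \<longrightarrow> z \<in> Bs u s t \<or> z \<in> w) \<and> (z \<in> Bs u s t \<longrightarrow> z \<in> w \<longrightarrow> z \<in> n)" for z
          by (rule sdiff_between[OF fins(1,2,3)]) (use n1 n2 in simp)
        have "sdiff n u \<subseteq> sdiff (Bs u s t) u \<union> sdiff w u"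
        proof
          fix z assume "z \<in> sdiff n u"
          then show "z \<in> sdiff (Bs u s t) u \<union> sdiff w u" using btw[of z] by auto
        qed
        moreover have "sdiff (Bs u s t) u \<subseteq> s ` {..<m}" unfolding rel_Bs using t by auto
        ultimately have nbox: "sdiff n u \<subseteq> s ` {..<m}" using wbox by auto
        have "card (sdiff n (Bs u s t)) = 1" using n1 sdiff_comm by metis
        from Deg[OF t(1,2) nV nbox this]
        show ?thesis
        proof
          assume "n = Bs u s (t-1)"
          then have e: "n = sdiff (Bs u s t) {s (t-1)}"
            using Bs_Suc[OF inj, of "t-1" u] t by auto
          have "s (t-1) \<in> sdiff (Bs u s t) w"
            using dec_mem[OF fins(1,2)] n2 e by metis
          moreover have "s (t-1) \<in> sdiff (Bs u s t) u" unfolding rel_Bs using t by auto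
          ultimately have "s (t-1) \<notin> sdiff w u" by auto
          then show ?thesis using t(3) by blast
        next
          assume "n = Bs u s (Suc t)"
          then have e: "n = sdiff (Bs u s t) {s t}"
            using Bs_Suc[OF inj, of "t" u] t by auto
          have "s t \<in> sdiff (Bs u s t) w"
            using dec_mem[OF fins(1,2)] n2 e by metis
          moreover have "s t \<notin> sdiff (Bs u s t) u" unfolding rel_Bs using t smem[of t "{..<t}"] by auto
          ultimately show "s t \<in> sdiff w u" by auto
        qed
      qed
      have Shape: "\<exists>j. 1 \<le> j \<and> j < m \<and> w = Ds u s m j" if w: "NB w" for w
      proof -
        have x1: "s 0 \<notin> sdiff w u" "s (m-1) \<in> sdiff w u" using X1[OF w] by auto
        define j where "j = (LEAST j. s j \<in> sdiff w u)"
        have jm: "j \<le> m - 1" unfolding j_def by (rule Least_le) (rule x1(2))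
        have js: "s j \<in> sdiff w u" unfolding j_def by (rule LeastI) (rule x1(2))
        have j0: "j \<noteq> 0"
        proof
          assume "j = 0"
          then show False using js x1(1) by simp
        qed
        have below: "s p \<notin> sdiff w u" if "p < j" for p
          using that unfolding j_def by (rule not_less_Least)
        have above: "s (j + k) \<in> sdiff w u" if "j + k < m" for k
          using that
        proof (induction k)
          case 0
          show ?case using js by simp
        next
          case (Suc k)
          then have "s (j+k) \<in> sdiff w u" by simp
          then show ?case using Up[OF w, of "j + Suc k"] Suc.prems j0 by simp
        qed
        have "sdiff w u = s ` {j..<m}"
        proof
          show "sdiff w u \<subseteq> s ` {j..<m}"
          proof
            fix z assume z: "z \<in> sdiff w u"
            then have "z \<in> s ` {..<m}" using w unfolding NB_def by blast
            then obtain p where p: "p < m" "z = s p" by blast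
            then have "\<not> p < j" using below z by blast
            then show "z \<in> s ` {j..<m}" using p by auto
          qed
          show "s ` {j..<m} \<subseteq> sdiff w u"
          proof
            fix z assume "z \<in> s ` {j..<m}"
            then obtain p where "j \<le> p" "p < m" "z = s p" by auto
            then show "z \<in> sdiff w u" using above[of "p - j"] by simp
          qed
        qed
        then have "w = Ds u s m j" unfolding Ds_def by (metis sdiff_invol)
        then show ?thesis using j0 jm m2 by (intro exI[of _ j]) auto
      qed
      have nbox: "sdiff n u \<subseteq> s ` {..<m}"
        if "a \<in> V" "b \<in> V" "n \<in> V" "sdiff a u \<subseteq> s ` {..<m}" "sdiff b u \<subseteq> s ` {..<m}"
          "Suc (card (sdiff n b)) = card (sdiff a b)" "card (sdiff a n) = 1" for a b n
      proof -
        have fins: "finite a" "finite b" "finite n" using finw that by auto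
        have btw: "(z \<in> n \<longrightarrow> z \<in> a \<or> z \<in> b) \<and> (z \<in> a \<longrightarrow> z \<in> b \<longrightarrow> z \<in> n)" for z
          by (rule sdiff_between[OF fins(1,2,3)]) (use that in simp)
        have "sdiff n u \<subseteq> sdiff a u \<union> sdiff b u"
        proof
          fix z assume "z \<in> sdiff n u"
          then show "z \<in> sdiff a u \<union> sdiff b u" using btw[of z] by auto
        qed
        then show ?thesis using that by auto
      qed
      have boxB: "sdiff (Bs u s t) u \<subseteq> s ` {..<m}" if "t \<le> m" for t
        unfolding rel_Bs using that by auto
      have boxD: "sdiff (Ds u s m j) u \<subseteq> s ` {..<m}" for j
        unfolding rel_Ds by auto
      have down: "Ds u s m (j-1) \<in> V" if j: "2 \<le> j" "j < m" and a: "Ds u s m j \<in> V" for j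
      proof -
        have c: "card (sdiff (Ds u s m j) (Bs u s m)) = j" using DBm_card[OF inj, of j u] j by simp
        then have ne: "Ds u s m j \<noteq> Bs u s m" using j by auto
        obtain n where nV: "n \<in> V" and n1: "card (sdiff (Ds u s m j) n) = 1"
          and n2: "Suc (card (sdiff n (Bs u s m))) = card (sdiff (Ds u s m j) (Bs u s m))"
          using iso[unfolded isoV_def, rule_format, OF a Bin[of m] ne] by auto
        have n2': "Suc (card (sdiff n (Bs u s m))) = j" using n2 c by simp
        have nb: "sdiff n u \<subseteq> s ` {..<m}"
          using nbox[OF a Bin[of m] nV boxD boxB n2 n1] by simp
        have "NB n"
          unfolding NB_def
        proof (intro conjI allI impI)
          show "n \<in> V" "sdiff n u \<subseteq> s ` {..<m}" using nV nb by auto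
          fix r assume r: "r \<le> m"
          show "n \<noteq> Bs u s r"
          proof
            assume e: "n = Bs u s r"
            show False
            proof (cases "r = 0 \<or> r = m")
              case True
              then show False
              proof
                assume "r = 0"
                then show False using n2' e BB_card[OF inj, of 0 m u] j by simp
              next
                assume "r = m"
                then show False using n2' e j by simp
              qed
            next
              case False
              then have "2 \<le> card (sdiff (Ds u s m j) (Bs u s r))"
                using DB2_card[OF inj, of r j u] r j by auto
              then show False using n1 e by simp
            qed
          qed
        qed
        from Shape[OF this] obtain j' where j': "1 \<le> j'" "j' < m" "n = Ds u s m j'" by blast
        then have "j' = j - 1" using n2' DBm_card[OF inj, of j' u] by simp
        then show ?thesis using nV j' by simp
      qed
      have up: "Ds u s m (Suc j) \<in> V" if j: "1 \<le> j" "Suc j < m" and a: "Ds u s m j \<in> V" for j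
      proof -
        have c: "card (sdiff (Ds u s m j) (Bs u s 0)) = m - j" using DB0_card[OF inj, of j u] j by simp
        then have ne: "Ds u s m j \<noteq> Bs u s 0" using j by auto
        obtain n where nV: "n \<in> V" and n1: "card (sdiff (Ds u s m j) n) = 1"
          and n2: "Suc (card (sdiff n (Bs u s 0))) = card (sdiff (Ds u s m j) (Bs u s 0))"
          using iso[unfolded isoV_def, rule_format, OF a Bin[of 0] ne] by auto
        have n2': "Suc (card (sdiff n (Bs u s 0))) = m - j" using n2 c by simp
        have nb: "sdiff n u \<subseteq> s ` {..<m}"
          using nbox[OF a Bin[of 0] nV boxD boxB n2 n1] by simp
        have "NB n"
          unfolding NB_def
        proof (intro conjI allI impI)
          show "n \<in> V" "sdiff n u \<subseteq> s ` {..<m}" using nV nb by auto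
          fix r assume r: "r \<le> m"
          show "n \<noteq> Bs u s r"
          proof
            assume e: "n = Bs u s r"
            show False
            proof (cases "r = 0 \<or> r = m")
              case True
              then show False
              proof
                assume "r = 0"
                then show False using n2' e j by simp
              next
                assume "r = m"
                then show False using n2' e BB_card[OF inj, of m 0 u] j by simp
              qed
            next
              case False
              then have "2 \<le> card (sdiff (Ds u s m j) (Bs u s r))"
                using DB2_card[OF inj, of r j u] r j by auto
              then show False using n1 e by simp
            qed
          qed
        qed
        from Shape[OF this] obtain j' where j': "1 \<le> j'" "j' < m" "n = Ds u s m j'" by blast
        then have "j' = Suc j" using n2' DB0_card[OF inj, of j' u] by simp
        then show ?thesis using nV j' by simp
      qed
      have xNB: "NB x" unfolding NB_def using xV xbox xnB by auto
      from Shape[OF xNB] obtain j0 where j0: "1 \<le> j0" "j0 < m" "x = Ds u s m j0" by blast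
      have dn: "Ds u s m (j0 - k) \<in> V" if "k < j0" for k
        using that
      proof (induction k)
        case 0
        then show ?case using xV j0 by simp
      next
        case (Suc k)
        then have "Ds u s m (j0 - k) \<in> V" by simp
        moreover have "j0 - k - 1 = j0 - Suc k" by simp
        moreover have "2 \<le> j0 - k" "j0 - k < m" using Suc.prems j0 by auto
        ultimately show ?case using down[of "j0 - k"] by metis
      qed
      have upk: "Ds u s m (j0 + k) \<in> V" if "j0 + k < m" for k
        using that
      proof (induction k)
        case 0
        then show ?case using xV j0 by simp
      next
        case (Suc k)
        then have "Ds u s m (j0 + k) \<in> V" by simp
        then show ?case using up[of "j0 + k"] Suc.prems j0 by simp
      qed
      have Dall: "Ds u s m j \<in> V" if "1 \<le> j" "j < m" for j
      proof (cases "j \<le> j0")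
        case True
        then show ?thesis using dn[of "j0 - j"] that by simp
      next
        case False
        then show ?thesis using upk[of "j - j0"] that by simp
      qed
      have m3: "3 \<le> m"
      proof (rule ccontr)
        assume "\<not> 3 \<le> m"
        then have m2': "m = 2" using m2 by simp
        then have "j0 = 1" using j0 by simp
        then have "Ds u s m j0 = sdiff (Bs u s (1 - 1)) {s 1}"
        proof -
          have "{1..<m} = {1::nat}" using m2' by auto
          then show ?thesis using \<open>j0 = 1\<close> unfolding Ds_def by simp
        qed
        then show False using nsq[of 1] m2' xV j0 by simp
      qed
      have "CS V u s m"
        unfolding CS_def
      proof (intro conjI allI impI ballI)
        show "3 \<le> m" "inj_on s {..<m}" by (fact m3) (fact inj)
        show "Bs u s t \<in> V" if "t \<le> m" for t using Bin that by simp
        show "Ds u s m j \<in> V" if "1 \<le> j \<and> j < m" for j using Dall that by simp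
        show "(\<exists>t\<le>m. w = Bs u s t) \<or> (\<exists>j. 1 \<le> j \<and> j < m \<and> w = Ds u s m j)"
          if "w \<in> V" "sdiff w u \<subseteq> s ` {..<m}" for w
        proof (cases "\<exists>t\<le>m. w = Bs u s t")
          case True
          then show ?thesis by blast
        next
          case False
          then have "NB w" unfolding NB_def using that by blast
          from Shape[OF this] show ?thesis by blast
        qed
        show "w = Bs u s (t - 1) \<or> w = Bs u s (Suc t)"
          if "1 \<le> t \<and> t < m \<and> w \<in> V \<and> sdiff w u \<subseteq> s ` {..<m} \<and> card (sdiff w (Bs u s t)) = 1" for t w
          using Deg that by blast
      qed
      then show False using noCS by blast
    qed
  qed
qed

lemma adj_verts: "wf_graph G \<Longrightarrow> adj G a b \<Longrightarrow> a \<in> verts G \<and> b \<in> verts G"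
  unfolding wf_graph_def adj_def by (auto simp: doubleton_eq_iff)

lemma walk_map:
  assumes "walk G xs"
    and "\<And>a b. a \<in> verts G \<Longrightarrow> b \<in> verts G \<Longrightarrow> adj G a b \<Longrightarrow> adj G' (h a) (h b)"
    and "\<And>a. a \<in> verts G \<Longrightarrow> h a \<in> verts G'"
  shows "walk G' (map h xs)"
proof -
  have xs: "xs \<noteq> []" "set xs \<subseteq> verts G" "\<And>i. Suc i < length xs \<Longrightarrow> adj G (xs ! i) (xs ! Suc i)"
    using assms(1) unfolding walk_def by auto
  show ?thesis unfolding walk_def
  proof (intro conjI allI impI)
    show "map h xs \<noteq> []" using xs by simp
    show "set (map h xs) \<subseteq> verts G'" using xs assms(3) by auto
    fix i assume i: "Suc i < length (map h xs)"
    then have "xs ! i \<in> verts G" "xs ! Suc i \<in> verts G" using xs(2) by auto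
    then show "adj G' (map h xs ! i) (map h xs ! Suc i)"
      using assms(2) xs(3) i by simp
  qed
qed

lemma walk_snoc:
  assumes "walk G xs" "adj G (last xs) y" "y \<in> verts G"
  shows "walk G (xs @ [y])"
proof -
  have xs: "xs \<noteq> []" "set xs \<subseteq> verts G" "\<And>i. Suc i < length xs \<Longrightarrow> adj G (xs ! i) (xs ! Suc i)"
    using assms(1) unfolding walk_def by auto
  show ?thesis unfolding walk_def
  proof (intro conjI allI impI)
    show "xs @ [y] \<noteq> []" by simp
    show "set (xs @ [y]) \<subseteq> verts G" using xs assms(3) by auto
    fix i assume i: "Suc i < length (xs @ [y])"
    show "adj G ((xs @ [y]) ! i) ((xs @ [y]) ! Suc i)"
    proof (cases "Suc i < length xs")
      case True
      then show ?thesis using xs(3) by (simp add: nth_append)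
    next
      case False
      then have ii: "i = length xs - 1" using i by simp
      then have "(xs @ [y]) ! i = last xs" "(xs @ [y]) ! Suc i = y"
        using xs(1) i by (auto simp: nth_append last_conv_nth)
      then show ?thesis using assms(2) by simp
    qed
  qed
qed

lemma walk_Cons:
  assumes "walk G (a # xs)" "xs \<noteq> []"
  shows "walk G xs \<and> adj G a (hd xs)"
proof -
  have w: "set (a # xs) \<subseteq> verts G" "\<And>i. Suc i < length (a # xs) \<Longrightarrow> adj G ((a # xs) ! i) ((a # xs) ! Suc i)"
    using assms(1) unfolding walk_def by auto
  have "walk G xs" unfolding walk_def
  proof (intro conjI allI impI)
    show "xs \<noteq> []" by (fact assms(2))
    show "set xs \<subseteq> verts G" using w by auto
    fix i assume "Suc i < length xs"
    then show "adj G (xs ! i) (xs ! Suc i)" using w(2)[of "Suc i"] by simp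
  qed
  moreover have "adj G a (hd xs)" using w(2)[of 0] assms(2) by (simp add: hd_conv_nth)
  ultimately show ?thesis by simp
qed

lemma walk_take:
  assumes "walk G xs" "q < length xs"
  shows "walk G (take (Suc q) xs)"
  using assms unfolding walk_def
  by (auto dest: in_set_takeD)

lemma walk_drop:
  assumes "walk G xs" "q < length xs"
  shows "walk G (drop q xs)"
  using assms unfolding walk_def
  by (auto dest: in_set_dropD simp: add.commute)

lemma gdist_le:
  assumes "walk G xs"
  shows "gdist G (hd xs) (last xs) \<le> length xs - 1"
  unfolding gdist_def by (rule Least_le) (use assms in blast)

lemma gdist_ex:
  assumes "walk G xs" "hd xs = u" "last xs = v"
  shows "\<exists>ys. walk G ys \<and> hd ys = u \<and> last ys = v \<and> length ys - 1 = gdist G u v"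
proof -
  have "\<exists>n. \<exists>xs. walk G xs \<and> hd xs = u \<and> last xs = v \<and> length xs - 1 = n" using assms by blast
  then show ?thesis unfolding gdist_def by (rule LeastI_ex)
qed

lemma hyp_adj:
  "adj (hypercube n) S T \<longleftrightarrow> S \<subseteq> {0..<n} \<and> T \<subseteq> {0..<n} \<and> card (sdiff S T) = 1"
proof
  assume "adj (hypercube n) S T"
  then obtain S' T' where e: "{S, T} = {S', T'}" "S' \<subseteq> {0..<n}" "T' \<subseteq> {0..<n}"
    "card ((S' - T') \<union> (T' - S')) = 1"
    unfolding adj_def hypercube_def by auto
  from e(1) have "(S = S' \<and> T = T') \<or> (S = T' \<and> T = S')" by (auto simp: doubleton_eq_iff)
  then show "S \<subseteq> {0..<n} \<and> T \<subseteq> {0..<n} \<and> card (sdiff S T) = 1"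
    using e unfolding sdiff_def by (auto simp: Un_commute)
next
  assume a: "S \<subseteq> {0..<n} \<and> T \<subseteq> {0..<n} \<and> card (sdiff S T) = 1"
  then have "S \<noteq> T" by auto
  then show "adj (hypercube n) S T"
    using a unfolding adj_def hypercube_def sdiff_def by auto
qed

lemma hyp_lower:
  "walk (hypercube n) xs \<Longrightarrow> card (sdiff (hd xs) (last xs)) \<le> length xs - 1"
proof (induction xs)
  case Nil
  then show ?case by (simp add: walk_def)
next
  case (Cons a xs)
  show ?case
  proof (cases "xs = []")
    case True
    then show ?thesis by simp
  next
    case False
    from walk_Cons[OF Cons.prems False] have w: "walk (hypercube n) xs" "adj (hypercube n) a (hd xs)" by auto
    have IH: "card (sdiff (hd xs) (last xs)) \<le> length xs - 1" using Cons.IH w(1) by simp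
    have sub: "set (a # xs) \<subseteq> Pow {0..<n}" using Cons.prems unfolding walk_def hypercube_def by simp
    have "hd xs \<in> set (a # xs)" "last xs \<in> set (a # xs)" using False by auto
    then have "a \<subseteq> {0..<n}" "hd xs \<subseteq> {0..<n}" "last xs \<subseteq> {0..<n}" using sub by auto
    then have fa: "finite a" "finite (hd xs)" "finite (last xs)"
      using finite_subset[of _ "{0..<n}"] by auto
    have "card (sdiff a (last xs)) \<le> card (sdiff a (hd xs)) + card (sdiff (hd xs) (last xs))"
      by (rule sdiff_tri[OF fa])
    moreover have "card (sdiff a (hd xs)) = 1" using w(2) hyp_adj by blast
    moreover have "0 < length xs" using False by simp
    ultimately have "card (sdiff a (last xs)) \<le> length xs" using IH by linarith
    then show ?thesis using False by simp
  qed
qed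

lemma hyp_walk:
  assumes "S \<subseteq> {0..<n}" "D \<subseteq> {0..<n}"
  shows "\<exists>xs. walk (hypercube n) xs \<and> hd xs = S \<and> last xs = sdiff S D \<and> length xs = Suc (card D)"
proof -
  have "finite D" using assms(2) finite_subset by blast
  then show ?thesis using assms(2)
  proof (induction D rule: finite_induct)
    case empty
    have "walk (hypercube n) [S]" using assms(1) unfolding walk_def hypercube_def by simp
    then show ?case by (intro exI[of _ "[S]"]) simp
  next
    case (insert d D)
    then obtain xs where xs: "walk (hypercube n) xs" "hd xs = S" "last xs = sdiff S D" "length xs = Suc (card D)"
      by auto
    have e: "sdiff S (insert d D) = sdiff (sdiff S D) {d}" using insert(2) by auto
    have sub: "sdiff S D \<subseteq> {0..<n}" "sdiff (sdiff S D) {d} \<subseteq> {0..<n}" using assms(1) insert(4)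
      unfolding sdiff_def by blast+
    have "card (sdiff (sdiff S D) (sdiff (sdiff S D) {d})) = 1"
    proof -
      have "sdiff (sdiff S D) (sdiff (sdiff S D) {d}) = {d}" by auto
      then show ?thesis by simp
    qed
    then have "adj (hypercube n) (last xs) (sdiff (sdiff S D) {d})" using sub xs(3) hyp_adj by auto
    moreover have "sdiff (sdiff S D) {d} \<in> verts (hypercube n)" using sub unfolding hypercube_def by auto
    ultimately have "walk (hypercube n) (xs @ [sdiff (sdiff S D) {d}])" using walk_snoc[OF xs(1)] by blast
    then show ?case using xs insert(1,2) e
      by (intro exI[of _ "xs @ [sdiff (sdiff S D) {d}]"]) (auto simp: hd_append)
  qed
qed

lemma hyp_gdist:
  assumes "S \<subseteq> {0..<n}" "T \<subseteq> {0..<n}"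
  shows "gdist (hypercube n) S T = card (sdiff S T)"
  unfolding gdist_def
proof (rule Least_equality)
  have "sdiff S T \<subseteq> {0..<n}" using assms unfolding sdiff_def by blast
  from hyp_walk[OF assms(1) this] obtain xs where
    "walk (hypercube n) xs" "hd xs = S" "last xs = sdiff S (sdiff S T)" "length xs = Suc (card (sdiff S T))"
    by blast
  moreover have "sdiff S (sdiff S T) = T" by auto
  ultimately show "\<exists>xs. walk (hypercube n) xs \<and> hd xs = S \<and> last xs = T \<and> length xs - 1 = card (sdiff S T)"
    by (intro exI[of _ xs]) auto
next
  fix y assume "\<exists>xs. walk (hypercube n) xs \<and> hd xs = S \<and> last xs = T \<and> length xs - 1 = y"
  then show "card (sdiff S T) \<le> y" using hyp_lower by blast
qed

definition goodL :: "'a graph \<Rightarrow> ('a \<Rightarrow> nat set) \<Rightarrow> bool" where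
  "goodL G L \<longleftrightarrow> wf_graph G \<and> connected_graph G \<and> inj_on L (verts G) \<and>
     (\<forall>v\<in>verts G. finite (L v)) \<and>
     (\<forall>u\<in>verts G. \<forall>v\<in>verts G. gdist G u v = card (sdiff (L u) (L v)))"

lemma pc_label:
  assumes "partial_cube G"
  shows "\<exists>L. goodL G L"
proof -
  have wfG: "wf_graph G" and conG: "connected_graph G" using assms unfolding partial_cube_def by auto
  obtain n H where isoH: "isometric_subgraph H (hypercube n)" and iso: "isomorphic G H"
    using assms unfolding partial_cube_def by auto
  obtain f where bij: "bij_betw f (verts G) (verts H)"
    and fadj: "\<forall>u\<in>verts G. \<forall>v\<in>verts G. adj G u v \<longleftrightarrow> adj H (f u) (f v)"
    using iso unfolding isomorphic_def by auto
  have subH: "verts H \<subseteq> Pow {0..<n}" "edges H \<subseteq> edges (hypercube n)"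
    using isoH unfolding isometric_subgraph_def subgraph_def hypercube_def by auto
  have gH: "\<And>a b. a \<in> verts H \<Longrightarrow> b \<in> verts H \<Longrightarrow> gdist H a b = gdist (hypercube n) a b"
    using isoH unfolding isometric_subgraph_def by auto
  define g where "g = inv_into (verts G) f"
  have fimg: "f ` verts G = verts H" using bij by (simp add: bij_betw_def)
  have injf: "inj_on f (verts G)" using bij by (simp add: bij_betw_def)
  have fg: "g a \<in> verts G" "f (g a) = a" if "a \<in> verts H" for a
  proof -
    have "a \<in> f ` verts G" using that fimg by simp
    then show "g a \<in> verts G" "f (g a) = a" unfolding g_def
      by (rule inv_into_into, rule f_inv_into_f)
  qed
  have gf: "g (f a) = a" if "a \<in> verts G" for a
    using that injf unfolding g_def by (simp add: inv_into_f_f)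
  have fV: "f a \<in> verts H" if "a \<in> verts G" for a using that fimg by auto
  have walkGH: "walk H (map f xs)" if "walk G xs" for xs
    by (rule walk_map[OF that]) (use fadj fV in auto)
  have walkHG: "walk G (map g ys)" if "walk H ys" for ys
  proof (rule walk_map[OF that])
    fix a b assume ab: "a \<in> verts H" "b \<in> verts H" "adj H a b"
    then show "adj G (g a) (g b)" using fadj fg[OF ab(1)] fg[OF ab(2)] by metis
  next
    fix a assume "a \<in> verts H" then show "g a \<in> verts G" using fg by auto
  qed
  have walkHhyp: "walk (hypercube n) ys" if "walk H ys" for ys
  proof -
    have "walk (hypercube n) (map id ys)"
    proof (rule walk_map[OF that])
      fix a b assume "a \<in> verts H" "b \<in> verts H" "adj H a b"
      then show "adj (hypercube n) (id a) (id b)" using subH(2) unfolding adj_def by auto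
    next
      fix a assume "a \<in> verts H" then show "id a \<in> verts (hypercube n)"
        using subH(1) unfolding hypercube_def by auto
    qed
    then show ?thesis by simp
  qed
  have dist: "gdist G u v = card (sdiff (f u) (f v))" if uv: "u \<in> verts G" "v \<in> verts G" for u v
  proof -
    obtain xs where xs: "walk G xs" "hd xs = u" "last xs = v" using conG uv unfolding connected_graph_def by blast
    obtain ys where ys: "walk G ys" "hd ys = u" "last ys = v" "length ys - 1 = gdist G u v"
      using gdist_ex[OF xs] by blast
    have yne: "ys \<noteq> []" using ys(1) unfolding walk_def by simp
    have "walk (hypercube n) (map f ys)" using walkHhyp walkGH ys(1) by blast
    from hyp_lower[OF this] have lo: "card (sdiff (f u) (f v)) \<le> gdist G u v"
      using ys yne by (simp add: hd_map last_map)
    have wH: "walk H (map f xs)" using walkGH xs(1) by blast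
    have xne: "xs \<noteq> []" using xs(1) unfolding walk_def by simp
    have "hd (map f xs) = f u" "last (map f xs) = f v" using xne xs by (auto simp: hd_map last_map)
    from gdist_ex[OF wH this] obtain zs where zs: "walk H zs" "hd zs = f u" "last zs = f v" "length zs - 1 = gdist H (f u) (f v)"
      by blast
    have fuv: "f u \<subseteq> {0..<n}" "f v \<subseteq> {0..<n}" using fV uv subH(1) by auto
    have "gdist H (f u) (f v) = card (sdiff (f u) (f v))"
      using gH[OF fV[OF uv(1)] fV[OF uv(2)]] hyp_gdist[OF fuv] by simp
    moreover have "walk G (map g zs)" using walkHG zs(1) by blast
    moreover have zne: "zs \<noteq> []" using zs(1) unfolding walk_def by simp
    ultimately have "gdist G u v \<le> card (sdiff (f u) (f v))"
      using gdist_le[of G "map g zs"] zs gf uv by (simp add: hd_map last_map)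
    then show ?thesis using lo by simp
  qed
  have fin: "finite (f v)" if "v \<in> verts G" for v
    using fV[OF that] subH(1) finite_subset[of "f v" "{0..<n}"] by auto
  show ?thesis unfolding goodL_def using wfG conG injf fin dist by (intro exI[of _ f]) auto
qed

lemma walk2: "u \<in> verts G \<Longrightarrow> v \<in> verts G \<Longrightarrow> adj G u v \<Longrightarrow> walk G [u, v]"
  unfolding walk_def by (auto simp: less_Suc_eq)

lemma gL_adj:
  assumes "goodL G L"
  shows "adj G u v \<longleftrightarrow> u \<in> verts G \<and> v \<in> verts G \<and> card (sdiff (L u) (L v)) = 1"
proof
  have wf: "wf_graph G" and inj: "inj_on L (verts G)" and fin: "\<forall>v\<in>verts G. finite (L v)"
    and d: "\<forall>u\<in>verts G. \<forall>v\<in>verts G. gdist G u v = card (sdiff (L u) (L v))"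
    using assms unfolding goodL_def by auto
  assume a: "adj G u v"
  have uv: "u \<in> verts G" "v \<in> verts G" using adj_verts[OF wf a] by auto
  have "gdist G u v \<le> 1" using gdist_le[OF walk2[OF uv a]] by simp
  moreover have "u \<noteq> v" using a unfolding adj_def by simp
  then have "L u \<noteq> L v" using inj uv by (auto dest: inj_onD)
  then have "sdiff (L u) (L v) \<noteq> {}" by auto
  then have "card (sdiff (L u) (L v)) \<noteq> 0" using fin uv by auto
  ultimately show "u \<in> verts G \<and> v \<in> verts G \<and> card (sdiff (L u) (L v)) = 1" using d uv by auto
next
  have con: "connected_graph G"
    and d: "\<forall>u\<in>verts G. \<forall>v\<in>verts G. gdist G u v = card (sdiff (L u) (L v))"
    using assms unfolding goodL_def by auto
  assume a: "u \<in> verts G \<and> v \<in> verts G \<and> card (sdiff (L u) (L v)) = 1"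
  obtain xs where xs: "walk G xs" "hd xs = u" "last xs = v" using con a unfolding connected_graph_def by blast
  obtain ys where ys: "walk G ys" "hd ys = u" "last ys = v" "length ys - 1 = gdist G u v"
    using gdist_ex[OF xs] by blast
  then have l: "length ys = 2" using a d by auto
  then have "adj G (ys ! 0) (ys ! Suc 0)" using ys(1) unfolding walk_def by auto
  moreover have "ys ! 0 = u" using ys(2) l by (cases ys) auto
  moreover have "ys ! Suc 0 = v"
  proof -
    have "ys \<noteq> []" using l by auto
    then have "last ys = ys ! (length ys - 1)" by (rule last_conv_nth)
    then show ?thesis using ys(3) l by simp
  qed
  ultimately show "adj G u v" by simp
qed

lemma gL_fin: "goodL G L \<Longrightarrow> finV (L ` verts G)"
  unfolding goodL_def finV_def by auto

lemma gL_geo: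
  assumes gl: "goodL G L" and w: "walk G xs" and q: "q < length xs"
    and sp: "length xs - 1 = gdist G (hd xs) (last xs)"
  shows "card (sdiff (L (hd xs)) (L (xs ! q))) + card (sdiff (L (xs ! q)) (L (last xs)))
          \<le> card (sdiff (L (hd xs)) (L (last xs)))"
proof -
  have d: "\<forall>u\<in>verts G. \<forall>v\<in>verts G. gdist G u v = card (sdiff (L u) (L v))"
    using gl unfolding goodL_def by auto
  have xne: "xs \<noteq> []" and sv: "set xs \<subseteq> verts G" using w unfolding walk_def by auto
  have vs: "hd xs \<in> verts G" "last xs \<in> verts G" "xs ! q \<in> verts G" using xne sv q by auto
  have "gdist G (hd (take (Suc q) xs)) (last (take (Suc q) xs)) \<le> length (take (Suc q) xs) - 1"
    by (rule gdist_le[OF walk_take[OF w q]])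
  moreover have "hd (take (Suc q) xs) = hd xs" using xne by (cases xs) auto
  moreover have lt: "length (take (Suc q) xs) = Suc q" using q by simp
  moreover have "last (take (Suc q) xs) = xs ! q"
  proof -
    have "take (Suc q) xs \<noteq> []" using lt by auto
    then have "last (take (Suc q) xs) = take (Suc q) xs ! q" using lt by (simp add: last_conv_nth)
    then show ?thesis by simp
  qed
  ultimately have g1: "gdist G (hd xs) (xs ! q) \<le> q" by simp
  have "gdist G (hd (drop q xs)) (last (drop q xs)) \<le> length (drop q xs) - 1"
    by (rule gdist_le[OF walk_drop[OF w q]])
  then have g2: "gdist G (xs ! q) (last xs) \<le> length xs - 1 - q" using q xne by (simp add: hd_drop_conv_nth)
  show ?thesis using g1 g2 sp d vs q by auto
qed

lemma gL_iso:
  assumes gl: "goodL G L"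
  shows "isoV (L ` verts G)"
  unfolding isoV_def
proof (intro ballI impI)
  have con: "connected_graph G" and fin: "\<forall>v\<in>verts G. finite (L v)"
    and d: "\<forall>u\<in>verts G. \<forall>v\<in>verts G. gdist G u v = card (sdiff (L u) (L v))"
    using gl unfolding goodL_def by auto
  fix a b assume a: "a \<in> L ` verts G" and b: "b \<in> L ` verts G" and ne: "a \<noteq> b"
  obtain x y where xy: "x \<in> verts G" "y \<in> verts G" "a = L x" "b = L y" using a b by auto
  obtain xs where xs: "walk G xs" "hd xs = x" "last xs = y" using con xy unfolding connected_graph_def by blast
  obtain ys where ys: "walk G ys" "hd ys = x" "last ys = y" "length ys - 1 = gdist G x y"
    using gdist_ex[OF xs] by blast
  have "sdiff a b \<noteq> {}" using ne by auto
  then have c0: "card (sdiff a b) \<noteq> 0" using fin xy by auto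
  have l2: "2 \<le> length ys" using ys(4) d xy c0 by auto
  have sv: "set ys \<subseteq> verts G" using ys(1) unfolding walk_def by auto
  define z where "z = ys ! 1"
  have zV: "z \<in> verts G" using sv l2 unfolding z_def by auto
  have "adj G (ys ! 0) (ys ! Suc 0)" using ys(1) l2 unfolding walk_def by auto
  moreover have "ys ! 0 = x" using ys(2) l2 by (cases ys) auto
  ultimately have "adj G x z" unfolding z_def by simp
  then have c1: "card (sdiff a (L z)) = 1" using gL_adj[OF gl] xy by auto
  have "gdist G (hd (drop 1 ys)) (last (drop 1 ys)) \<le> length (drop 1 ys) - 1"
    by (rule gdist_le[OF walk_drop[OF ys(1)]]) (use l2 in simp)
  then have "gdist G z y \<le> length ys - 2" using l2 ys(3) unfolding z_def by (simp add: hd_drop_conv_nth)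
  then have c2: "card (sdiff (L z) b) \<le> card (sdiff a b) - 1" using d zV xy ys(4) by auto
  have "card (sdiff a b) \<le> card (sdiff a (L z)) + card (sdiff (L z) b)"
    by (rule sdiff_tri) (use fin xy zV in auto)
  then have "Suc (card (sdiff (L z) b)) = card (sdiff a b)" using c1 c2 c0 by linarith
  then show "\<exists>n\<in>L ` verts G. card (sdiff a n) = 1 \<and> Suc (card (sdiff n b)) = card (sdiff a b)"
    using c1 zV by blast
qed

lemma gL_Theta:
  assumes gl: "goodL G L" and ab: "adj G a b" and xy: "adj G x y"
  shows "Theta G a b x y \<longleftrightarrow> sdiff (L a) (L b) = sdiff (L x) (L y)"
proof -
  have fin: "\<forall>v\<in>verts G. finite (L v)"
    and d: "\<forall>u\<in>verts G. \<forall>v\<in>verts G. gdist G u v = card (sdiff (L u) (L v))"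
    using gl unfolding goodL_def by auto
  have A: "a \<in> verts G" "b \<in> verts G" "card (sdiff (L a) (L b)) = 1" using gL_adj[OF gl] ab by auto
  have X: "x \<in> verts G" "y \<in> verts G" "card (sdiff (L x) (L y)) = 1" using gL_adj[OF gl] xy by auto
  obtain \<alpha> where al: "sdiff (L a) (L b) = {\<alpha>}" using A(3) card_1_singletonE by blast
  obtain \<beta> where be: "sdiff (L x) (L y) = {\<beta>}" using X(3) card_1_singletonE by blast
  have Lb: "L b = sdiff (L a) {\<alpha>}" using al by (metis sdiff_cancel sdiff_empty(1) sdiff_invol sdiff_comm)
  have Ly: "L y = sdiff (L x) {\<beta>}" using be by (metis sdiff_cancel sdiff_empty(1) sdiff_invol sdiff_comm)
  define D where "D = sdiff (L a) (L x)"
  have fD: "finite D" unfolding D_def using fin A X by auto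
  have e1: "gdist G a x = card D" using d A X unfolding D_def by auto
  have e2: "gdist G b y = card (sdiff (sdiff D {\<alpha>}) {\<beta>})"
  proof -
    have "sdiff (L b) (L y) = sdiff (sdiff D {\<alpha>}) {\<beta>}" unfolding Lb Ly D_def by auto
    then show ?thesis using d A X by auto
  qed
  have e3: "gdist G a y = card (sdiff D {\<beta>})"
  proof -
    have "sdiff (L a) (L y) = sdiff D {\<beta>}" unfolding Ly D_def by auto
    then show ?thesis using d A X by auto
  qed
  have e4: "gdist G b x = card (sdiff D {\<alpha>})"
  proof -
    have "sdiff (L b) (L x) = sdiff D {\<alpha>}" unfolding Lb D_def by auto
    then show ?thesis using d A X by auto
  qed
  show ?thesis
  proof (cases "\<alpha> = \<beta>")
    case True
    have "sdiff (sdiff D {\<alpha>}) {\<beta>} = D" using True by auto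
    then have "Theta G a b x y" unfolding Theta_def e1 e2 e3 e4 using True card_sdiff_single[OF fD, of \<alpha>]
      by (cases "\<alpha> \<in> D") (auto simp: card_gt_0_iff fD)
    then show ?thesis using al be True by simp
  next
    case False
    have fD1: "finite (sdiff D {\<alpha>})" using fD by simp
    have cc: "card (sdiff (sdiff D {\<alpha>}) {\<beta>}) = (if \<beta> \<in> D then card (sdiff D {\<alpha>}) - 1 else Suc (card (sdiff D {\<alpha>})))"
      using card_sdiff_single[OF fD1, of \<beta>] False by simp
    have c1: "1 \<le> card D" if "\<beta> \<in> D" using that fD by (auto simp: Suc_le_eq card_gt_0_iff)
    have c2: "2 \<le> card D" if "\<alpha> \<in> D" "\<beta> \<in> D" using card_ge2[OF fD that] False by simp
    have c3: "1 \<le> card D" if "\<alpha> \<in> D" using that fD by (auto simp: Suc_le_eq card_gt_0_iff)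
    have "\<not> Theta G a b x y" unfolding Theta_def e1 e2 e3 e4
      using cc card_sdiff_single[OF fD, of \<alpha>] card_sdiff_single[OF fD, of \<beta>] False
        c1 c2 c3
      by (cases "\<alpha> \<in> D"; cases "\<beta> \<in> D") auto
    then show ?thesis using al be False by simp
  qed
qed

lemma gL_TC:
  assumes gl: "goodL G L" and ab: "adj G a b" and ab': "adj G a' b'"
    and e: "sdiff (L a) (L b) = sdiff (L a') (L b')"
  shows "Theta_class G a b = Theta_class G a' b'"
proof -
  have "Theta G a b x y = Theta G a' b' x y" if "adj G x y" for x y
    using gL_Theta[OF gl ab that] gL_Theta[OF gl ab' that] e by simp
  then show ?thesis unfolding Theta_class_def by blast
qed

lemma Bs_m_Ds0: "Bs u s m = Ds u s m 0"
  unfolding Bs_def Ds_def by (simp add: atLeast0LessThan)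

definition clab :: "'b set \<Rightarrow> (nat \<Rightarrow> 'b) \<Rightarrow> nat \<Rightarrow> nat \<Rightarrow> 'b set" where
  "clab u s m k = (if k \<le> m then Bs u s k else Ds u s m (k - m))"

lemma clab_D: "m \<le> k \<Longrightarrow> clab u s m k = Ds u s m (k - m)"
  unfolding clab_def using Bs_m_Ds0[of u s m] by (cases "k = m") auto

lemma clab_card_cases:
  assumes inj: "inj_on s {..<m}" and ij: "i < j" "j < 2 * m"
  shows "card (sdiff (clab u s m i) (clab u s m j)) = j - i
       \<or> (i = 0 \<and> card (sdiff (clab u s m i) (clab u s m j)) = 2 * m - j)
       \<or> 2 \<le> card (sdiff (clab u s m i) (clab u s m j))"
proof (cases "j \<le> m")
  case True
  then show ?thesis unfolding clab_def using BB_card[OF inj, of i j u] ij by auto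
next
  case jm: False
  show ?thesis
  proof (cases "m \<le> i")
    case True
    have ci: "clab u s m i = Ds u s m (i-m)" by (rule clab_D) (use True in simp)
    have cj: "clab u s m j = Ds u s m (j-m)" by (rule clab_D) (use True ij in simp)
    have "card (sdiff (Ds u s m (i-m)) (Ds u s m (j-m))) = j - i"
      using DD_card[OF inj, of "i - m" "j - m" u] ij True by simp
    then show ?thesis using ci cj by simp
  next
    case im: False
    have cj: "clab u s m j = Ds u s m (j - m)" by (rule clab_D) (use jm in simp)
    have ci: "clab u s m i = Bs u s i" unfolding clab_def using im by auto
    show ?thesis
    proof (cases "i = 0")
      case True
      have "card (sdiff (Ds u s m (j-m)) (Bs u s 0)) = m - (j - m)"
        by (rule DB0_card[OF inj]) (use ij in simp)
      moreover have "m - (j - m) = 2 * m - j" using jm by simp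
      ultimately have "card (sdiff (clab u s m i) (clab u s m j)) = 2 * m - j"
        using ci cj True sdiff_comm by metis
      then show ?thesis using True by simp
    next
      case False
      have "2 \<le> card (sdiff (Ds u s m (j - m)) (Bs u s i))"
        by (rule DB2_card[OF inj]) (use False im jm ij in auto)
      then show ?thesis using ci cj sdiff_comm by metis
    qed
  qed
qed

lemma clab_ne:
  assumes inj: "inj_on s {..<m}" and "i < 2 * m" "j < 2 * m" "i \<noteq> j"
  shows "card (sdiff (clab u s m i) (clab u s m j)) \<noteq> 0"
proof -
  have *: "card (sdiff (clab u s m i) (clab u s m j)) \<noteq> 0" if "i < j" "j < 2 * m" for i j
    using clab_card_cases[OF inj that, of u] that by auto
  show ?thesis
  proof (cases "i < j")
    case True
    then show ?thesis using * assms by simp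
  next
    case False
    then have "j < i" using assms by simp
    then show ?thesis using *[of j i] assms sdiff_comm by metis
  qed
qed

lemma clab_adj:
  assumes inj: "inj_on s {..<m}" and ij: "i < 2 * m" "j < 2 * m"
    and c: "card (sdiff (clab u s m i) (clab u s m j)) = 1"
  shows "j = Suc i mod (2 * m) \<or> i = Suc j mod (2 * m)"
proof -
  have *: "j = Suc i mod (2 * m) \<or> i = Suc j mod (2 * m)"
    if "i < j" "j < 2 * m" "card (sdiff (clab u s m i) (clab u s m j)) = 1" for i j
  proof -
    from clab_card_cases[OF inj that(1,2), of u] that(3)
    have "j - i = 1 \<or> (i = 0 \<and> 2 * m - j = 1)" by auto
    then show ?thesis
    proof
      assume "j - i = 1"
      then have "j = Suc i" using that by simp
      then show ?thesis using that by simp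
    next
      assume a: "i = 0 \<and> 2 * m - j = 1"
      then have "Suc j = 2 * m" using that by linarith
      then show ?thesis using a by simp
    qed
  qed
  show ?thesis
  proof (cases "i < j")
    case True
    then show ?thesis using * ij c by simp
  next
    case False
    have "i \<noteq> j" using c by auto
    then have "j < i" using False by simp
    then show ?thesis using *[of j i] ij c sdiff_comm by metis
  qed
qed

lemma clab_next:
  assumes inj: "inj_on s {..<m}" and m3: "3 \<le> m" and k: "k < 2 * m"
  shows "card (sdiff (clab u s m k) (clab u s m (Suc k mod (2 * m)))) = 1"
proof -
  consider "k < m" | "k = m" | "m < k" "Suc k < 2 * m" | "Suc k = 2 * m" using k by linarith
  then show ?thesis
  proof cases
    case 1
    then show ?thesis unfolding clab_def using BB_card[OF inj, of k "Suc k" u] m3 by simp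
  next
    case 2
    have "clab u s m k = Bs u s m" unfolding clab_def using 2 by simp
    moreover have "Suc k mod (2 * m) = Suc m" using 2 m3 by simp
    moreover have "clab u s m (Suc m) = Ds u s m 1" by (simp add: clab_D)
    ultimately show ?thesis using DBm_card[OF inj, of 1 u] m3 sdiff_comm by (metis le_add1 le_trans numeral_3_eq_3 one_le_numeral)
  next
    case 3
    have "clab u s m k = Ds u s m (k - m)" "clab u s m (Suc k) = Ds u s m (Suc k - m)"
      using 3 by (simp_all add: clab_D)
    moreover have "Suc k mod (2 * m) = Suc k" using 3 by simp
    ultimately show ?thesis using DD_card[OF inj, of "k - m" "Suc k - m" u] 3 by simp
  next
    case 4
    have "k - m = m - 1" using 4 by simp
    then have "clab u s m k = Ds u s m (m - 1)" using 4 clab_D[of m k u s] by simp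
    moreover have "Suc k mod (2 * m) = 0" using 4 by simp
    moreover have "clab u s m 0 = Bs u s 0" unfolding clab_def by simp
    ultimately show ?thesis using DB0_card[OF inj, of "m - 1" u] m3 by simp
  qed
qed

lemma CS_convex_cycle:
  assumes gl: "goodL G L" and cs: "CS (L ` verts G) u s m"
  shows "\<exists>vs. convex_cycle G vs \<and> length vs \<noteq> 4"
proof -
  define V where "V = L ` verts G"
  have m3: "3 \<le> m" and inj: "inj_on s {..<m}" and Bin: "\<And>t. t \<le> m \<Longrightarrow> Bs u s t \<in> V"
    and Dall: "\<And>j. 1 \<le> j \<Longrightarrow> j < m \<Longrightarrow> Ds u s m j \<in> V"
    and cls: "\<And>w. w \<in> V \<Longrightarrow> sdiff w u \<subseteq> s ` {..<m} \<Longrightarrow>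
        (\<exists>t\<le>m. w = Bs u s t) \<or> (\<exists>j. 1 \<le> j \<and> j < m \<and> w = Ds u s m j)"
    using cs unfolding CS_def V_def by auto
  have injL: "inj_on L (verts G)" and finL: "\<And>v. v \<in> verts G \<Longrightarrow> finite (L v)"
    using gl unfolding goodL_def by auto
  define Ld where "Ld = inv_into (verts G) L"
  have Ld1: "Ld a \<in> verts G" "L (Ld a) = a" if "a \<in> V" for a
  proof -
    have "a \<in> L ` verts G" using that unfolding V_def by simp
    then show "Ld a \<in> verts G" "L (Ld a) = a" unfolding Ld_def
      by (rule inv_into_into, rule f_inv_into_f)
  qed
  define c where "c = clab u s m"
  have cV: "c k \<in> V" if "k < 2 * m" for k
  proof (cases "k \<le> m")
    case True
    then show ?thesis unfolding c_def clab_def using Bin by simp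
  next
    case False
    then show ?thesis unfolding c_def clab_def using Dall[of "k - m"] that by simp
  qed
  have cbox: "sdiff (c k) u \<subseteq> s ` {..<m}" if "k < 2 * m" for k
  proof (cases "k \<le> m")
    case True
    then have "sdiff (c k) u = s ` {..<k}" unfolding c_def clab_def using rel_Bs by simp
    then show ?thesis using True by auto
  next
    case False
    then have "sdiff (c k) u = s ` {k - m..<m}" unfolding c_def clab_def using rel_Ds by simp
    then show ?thesis by auto
  qed
  have box: "\<exists>k<2 * m. w = c k" if "w \<in> V" "sdiff w u \<subseteq> s ` {..<m}" for w
  proof -
    from cls[OF that] show ?thesis
    proof
      assume "\<exists>t\<le>m. w = Bs u s t"
      then obtain t where "t \<le> m" "w = Bs u s t" by blast
      then have "w = c t" "t < 2 * m" unfolding c_def clab_def using m3 by auto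
      then show ?thesis by blast
    next
      assume "\<exists>j. 1 \<le> j \<and> j < m \<and> w = Ds u s m j"
      then obtain j where j: "1 \<le> j" "j < m" "w = Ds u s m j" by blast
      then have "w = c (m + j)" unfolding c_def using clab_D[of m "m + j" u s] by simp
      moreover have "m + j < 2 * m" using j by simp
      ultimately show ?thesis by blast
    qed
  qed
  define vs where "vs = map (\<lambda>k. Ld (c k)) [0..<2 * m]"
  have len: "length vs = 2 * m" unfolding vs_def by simp
  have vsn: "vs ! k = Ld (c k)" if "k < 2 * m" for k unfolding vs_def using that by simp
  have Lvs: "L (vs ! k) = c k" "vs ! k \<in> verts G" if "k < 2 * m" for k
    using vsn[OF that] Ld1[OF cV[OF that]] by auto
  have adjc: "adj G (vs ! i) (vs ! j) \<longleftrightarrow> card (sdiff (c i) (c j)) = 1"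
    if "i < 2 * m" "j < 2 * m" for i j
    using gL_adj[OF gl, of "vs ! i" "vs ! j"] Lvs that by auto
  have nxt: "adj G (vs ! i) (vs ! (Suc i mod (2 * m)))" if "i < 2 * m" for i
  proof -
    have "Suc i mod (2 * m) < 2 * m" using m3 by simp
    then show ?thesis using adjc that clab_next[OF inj m3 that, of u] unfolding c_def by simp
  qed
  have dist: "distinct vs"
    unfolding distinct_conv_nth len
  proof (intro allI impI)
    fix i j assume ij: "i < 2 * m" "j < 2 * m" "i \<noteq> j"
    show "vs ! i \<noteq> vs ! j"
    proof
      assume "vs ! i = vs ! j"
      then have "c i = c j" using Lvs ij by metis
      then show False using clab_ne[OF inj ij, of u] unfolding c_def by simp
    qed
  qed
  have setvs: "set vs \<subseteq> verts G" using Lvs len by (auto simp: in_set_conv_nth)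
  have cyc: "is_cycle G vs"
    unfolding is_cycle_def using len m3 dist setvs nxt by auto
  have edgesG: "edges (cycle_graph vs) \<subseteq> edges G"
  proof
    fix e assume "e \<in> edges (cycle_graph vs)"
    then obtain i where i: "i < 2 * m" "e = {vs ! i, vs ! (Suc i mod (2 * m))}"
      unfolding cycle_graph_def len by auto
    then show "e \<in> edges G" using nxt[OF i(1)] unfolding adj_def by simp
  qed
  have wfc: "wf_graph (cycle_graph vs)"
    unfolding wf_graph_def
  proof (intro conjI ballI)
    show "finite (verts (cycle_graph vs))" unfolding cycle_graph_def by simp
    fix e assume "e \<in> edges (cycle_graph vs)"
    then obtain i where i: "i < 2 * m" "e = {vs ! i, vs ! (Suc i mod (2 * m))}"
      unfolding cycle_graph_def len by auto
    have "Suc i mod (2 * m) < 2 * m" using m3 by simp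
    then have "vs ! i \<in> set vs" "vs ! (Suc i mod (2 * m)) \<in> set vs" using i len by auto
    moreover have "vs ! i \<noteq> vs ! (Suc i mod (2 * m))" using nxt[OF i(1)] unfolding adj_def by simp
    ultimately show "\<exists>u v. u \<noteq> v \<and> u \<in> verts (cycle_graph vs) \<and> v \<in> verts (cycle_graph vs) \<and> e = {u, v}"
      using i unfolding cycle_graph_def by auto
  qed
  have conv: "set xs \<subseteq> verts (cycle_graph vs) \<and>
      (\<forall>i. Suc i < length xs \<longrightarrow> {xs ! i, xs ! Suc i} \<in> edges (cycle_graph vs))"
    if a: "a \<in> verts (cycle_graph vs)" and b: "b \<in> verts (cycle_graph vs)"
      and sp: "shortest_path G a b xs" for a b xs
  proof -
    obtain ka where ka: "ka < 2 * m" "a = vs ! ka" using a len unfolding cycle_graph_def by (auto simp: in_set_conv_nth)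
    obtain kb where kb: "kb < 2 * m" "b = vs ! kb" using b len unfolding cycle_graph_def by (auto simp: in_set_conv_nth)
    have w: "walk G xs" and hx: "hd xs = a" and lx: "last xs = b" and lg: "length xs - 1 = gdist G a b"
      using sp unfolding shortest_path_def gpath_def by auto
    have sv: "set xs \<subseteq> verts G" using w unfolding walk_def by auto
    have inC: "\<exists>k<2 * m. xs ! q = vs ! k" if q: "q < length xs" for q
    proof -
      have g: "card (sdiff (L a) (L (xs ! q))) + card (sdiff (L (xs ! q)) (L b)) \<le> card (sdiff (L a) (L b))"
        using gL_geo[OF gl w q] hx lx lg by simp
      have xq: "xs ! q \<in> verts G" using sv q by auto
      have fins: "finite (L a)" "finite (L b)" "finite (L (xs ! q))"
        using finL[OF Lvs(2)[OF ka(1)]] finL[OF Lvs(2)[OF kb(1)]] finL[OF xq] ka kb by auto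
      have btw: "(z \<in> L (xs ! q) \<longrightarrow> z \<in> L a \<or> z \<in> L b) \<and> (z \<in> L a \<longrightarrow> z \<in> L b \<longrightarrow> z \<in> L (xs ! q))" for z
        by (rule sdiff_between[OF fins g])
      have "sdiff (L (xs ! q)) u \<subseteq> sdiff (L a) u \<union> sdiff (L b) u"
      proof
        fix z assume "z \<in> sdiff (L (xs ! q)) u"
        then show "z \<in> sdiff (L a) u \<union> sdiff (L b) u" using btw[of z] by auto
      qed
      moreover have "sdiff (L a) u \<subseteq> s ` {..<m}" "sdiff (L b) u \<subseteq> s ` {..<m}"
        using cbox Lvs ka kb by auto
      ultimately have "sdiff (L (xs ! q)) u \<subseteq> s ` {..<m}" by blast
      moreover have "L (xs ! q) \<in> V" unfolding V_def using xq by simp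
      ultimately obtain k where k: "k < 2 * m" "L (xs ! q) = c k" using box by blast
      then have "L (xs ! q) = L (vs ! k)" using Lvs by simp
      then have "xs ! q = vs ! k" using injL xq Lvs(2)[OF k(1)] by (auto dest: inj_onD)
      then show ?thesis using k by blast
    qed
    have "set xs \<subseteq> set vs"
    proof
      fix x assume "x \<in> set xs"
      then obtain q where "q < length xs" "x = xs ! q" by (auto simp: in_set_conv_nth)
      then obtain k where "k < 2 * m" "x = vs ! k" using inC by blast
      then show "x \<in> set vs" using len by auto
    qed
    moreover have "{xs ! i, xs ! Suc i} \<in> edges (cycle_graph vs)" if i: "Suc i < length xs" for i
    proof -
      obtain k1 where k1: "k1 < 2 * m" "xs ! i = vs ! k1" using inC[of i] i by auto
      obtain k2 where k2: "k2 < 2 * m" "xs ! Suc i = vs ! k2" using inC[of "Suc i"] i by auto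
      have "adj G (xs ! i) (xs ! Suc i)" using w i unfolding walk_def by auto
      then have "card (sdiff (c k1) (c k2)) = 1" using adjc k1 k2 by simp
      then have "k2 = Suc k1 mod (2 * m) \<or> k1 = Suc k2 mod (2 * m)"
        using clab_adj[OF inj k1(1) k2(1), of u] unfolding c_def by simp
      then show ?thesis
      proof
        assume "k2 = Suc k1 mod (2 * m)"
        then have "{xs ! i, xs ! Suc i} = {vs ! k1, vs ! (Suc k1 mod length vs)}" using k1 k2 len by simp
        then show ?thesis unfolding cycle_graph_def using k1 len by auto
      next
        assume "k1 = Suc k2 mod (2 * m)"
        then have "{xs ! i, xs ! Suc i} = {vs ! k2, vs ! (Suc k2 mod length vs)}" using k1 k2 len by auto
        then show ?thesis unfolding cycle_graph_def using k2 len by auto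
      qed
    qed
    ultimately show ?thesis unfolding cycle_graph_def by auto
  qed
  have "convex_subgraph (cycle_graph vs) G"
    unfolding convex_subgraph_def subgraph_def
    using wfc setvs edgesG conv by (auto simp: cycle_graph_def)
  then have "convex_cycle G vs" using cyc unfolding convex_cycle_def by simp
  moreover have "length vs \<noteq> 4" using len m3 by simp
  ultimately show ?thesis by blast
qed

lemma chain_lab:
  assumes stepL: "\<And>p. p < l \<Longrightarrow> L (P ! Suc p) = sdiff (L (P ! p)) {c p}"
    and inj: "inj_on (\<lambda>p. c (i + p)) {..<d}" and id: "i + d \<le> l"
  shows "t \<le> d \<Longrightarrow> Bs (L (P ! i)) (\<lambda>p. c (i + p)) t = L (P ! (i + t))"
proof (induction t)
  case 0
  then show ?case by simp
next
  case (Suc t)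
  then have "Bs (L (P ! i)) (\<lambda>p. c (i + p)) (Suc t) = sdiff (Bs (L (P ! i)) (\<lambda>p. c (i + p)) t) {c (i + t)}"
    using Bs_Suc[OF inj, of t] by simp
  also have "\<dots> = sdiff (L (P ! (i + t))) {c (i + t)}" using Suc by simp
  also have "\<dots> = L (P ! (i + Suc t))" using stepL[of "i + t"] Suc.prems id by simp
  finally show ?case .
qed

theorem mainTheorem5:
  fixes G :: "'a graph" and P :: "'a list"
  assumes "partial_cube G"
    and "\<forall>vs. convex_cycle G vs \<longrightarrow> length vs = 4"
    and "gpath G P" and "length P \<ge> 2"
    and "type_I G P"
  shows "shortest_path G (hd P) (last P) P"
proof -
  obtain L where gl: "goodL G L" using pc_label[OF assms(1)] by blast
  have injL: "inj_on L (verts G)"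
    and d: "\<forall>u\<in>verts G. \<forall>v\<in>verts G. gdist G u v = card (sdiff (L u) (L v))"
    using gl unfolding goodL_def by auto
  define V where "V = L ` verts G"
  have w: "walk G P" and dP: "distinct P" using assms(3) unfolding gpath_def by auto
  define l where "l = length P - 1"
  have lP: "length P = Suc l" "1 \<le> l" using assms(4) unfolding l_def by auto
  have PV: "P ! p \<in> verts G" if "p \<le> l" for p using w that lP unfolding walk_def by auto
  have adjP: "adj G (P ! p) (P ! Suc p)" if "p < l" for p using w that lP unfolding walk_def by auto
  define c where "c p = (SOME e. sdiff (L (P ! p)) (L (P ! Suc p)) = {e})" for p
  have cP: "sdiff (L (P ! p)) (L (P ! Suc p)) = {c p}" if "p < l" for p
  proof -
    have "card (sdiff (L (P ! p)) (L (P ! Suc p))) = 1" using gL_adj[OF gl] adjP[OF that] by simp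
    then obtain e where "sdiff (L (P ! p)) (L (P ! Suc p)) = {e}" by (rule card_1_singletonE)
    then show ?thesis unfolding c_def by (rule someI)
  qed
  have stepL: "L (P ! Suc p) = sdiff (L (P ! p)) {c p}" if "p < l" for p
    using cP[OF that] by (metis sdiff_invol sdiff_comm)
  have TI: "Theta_class G (P ! p) (P ! (p + 1)) \<notin> Fv G (P ! (p - 1))" if "1 \<le> p" "p < l" for p
    using assms(5) that unfolding type_I_def Let_def l_def by auto
  have nsq: "sdiff (L (P ! (p - 1))) {c p} \<notin> V" if p: "1 \<le> p" "p < l" for p
  proof
    assume "sdiff (L (P ! (p - 1))) {c p} \<in> V"
    then obtain x where x: "x \<in> verts G" "L x = sdiff (L (P ! (p - 1))) {c p}" unfolding V_def by auto
    have pv: "P ! (p - 1) \<in> verts G" using PV p by simp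
    have e: "sdiff (L (P ! (p - 1))) (L x) = {c p}" using x(2) by auto
    then have "adj G (P ! (p - 1)) x" using gL_adj[OF gl] pv x(1) by simp
    moreover have "adj G (P ! p) (P ! (p + 1))" using adjP p by simp
    moreover have "sdiff (L (P ! (p - 1))) (L x) = sdiff (L (P ! p)) (L (P ! (p + 1)))"
      using e cP[OF p(2)] by simp
    ultimately have "Theta_class G (P ! (p - 1)) x = Theta_class G (P ! p) (P ! (p + 1))"
      using gL_TC[OF gl] by blast
    then have "Theta_class G (P ! p) (P ! (p + 1)) \<in> Fv G (P ! (p - 1))"
      unfolding Fv_def using \<open>adj G (P ! (p - 1)) x\<close> by auto
    then show False using TI p by simp
  qed
  have injc: "inj_on c {..<l}"
  proof (rule ccontr)
    assume "\<not> inj_on c {..<l}"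
    then obtain a b where ab: "a < l" "b < l" "a \<noteq> b" "c a = c b" unfolding inj_on_def by auto
    define Q where "Q dd \<longleftrightarrow> (\<exists>i. 0 < dd \<and> i + dd < l \<and> c i = c (i + dd))" for dd
    have "Q (if a < b then b - a else a - b)" unfolding Q_def
    proof (cases "a < b")
      case True
      then show "\<exists>i. 0 < (if a < b then b - a else a - b) \<and> i + (if a < b then b - a else a - b) < l \<and>
          c i = c (i + (if a < b then b - a else a - b))"
        using ab by (intro exI[of _ a]) auto
    next
      case False
      then show "\<exists>i. 0 < (if a < b then b - a else a - b) \<and> i + (if a < b then b - a else a - b) < l \<and>
          c i = c (i + (if a < b then b - a else a - b))"
        using ab by (intro exI[of _ b]) auto
    qed
    then have Qd: "Q (LEAST dd. Q dd)" by (rule LeastI)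
    define dd where "dd = (LEAST dd. Q dd)"
    obtain i where i: "0 < dd" "i + dd < l" "c i = c (i + dd)" using Qd unfolding Q_def dd_def by blast
    have minq: "c x \<noteq> c y" if "x < y" "y < l" "y - x < dd" for x y
    proof
      assume "c x = c y"
      then have "Q (y - x)" unfolding Q_def using that by (intro exI[of _ x]) auto
      then show False using not_less_Least[of "y - x" Q] that unfolding dd_def by blast
    qed
    define s where "s p = c (i + p)" for p
    define u where "u = L (P ! i)"
    have injs: "inj_on s {..<dd}"
    proof (rule inj_onI)
      fix x y assume xy: "x \<in> {..<dd}" "y \<in> {..<dd}" "s x = s y"
      show "x = y"
      proof (rule ccontr)
        assume "x \<noteq> y"
        then consider "x < y" | "y < x" by linarith
        then show False
        proof cases
          case 1
          have "i + x < i + y" "i + y < l" "i + y - (i + x) < dd" using 1 xy i by auto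
          then show False using minq[of "i + x" "i + y"] xy unfolding s_def by auto
        next
          case 2
          have "i + y < i + x" "i + x < l" "i + x - (i + y) < dd" using 2 xy i by auto
          then show False using minq[of "i + y" "i + x"] xy unfolding s_def by auto
        qed
      qed
    qed
    have injs': "inj_on (\<lambda>p. c (i + p)) {..<dd}" using injs unfolding s_def by simp
    have BL: "Bs u s t = L (P ! (i + t))" if "t \<le> dd" for t
      using chain_lab[of l L P c, OF stepL injs' _ that] i unfolding u_def s_def by simp
    have ch: "chainok V u s dd"
      unfolding chainok_def
    proof (intro conjI allI impI)
      show "inj_on s {..<dd}" by (fact injs)
      fix t assume "t \<le> dd"
      then show "Bs u s t \<in> V" using BL PV i unfolding V_def by simp
    next
      fix t assume t: "1 \<le> t \<and> t < dd"
      have "t - 1 \<le> dd" using t by auto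
      then have "Bs u s (t - 1) = L (P ! (i + (t - 1)))" by (rule BL)
      moreover have "i + (t - 1) = i + t - 1" using t by auto
      ultimately have "Bs u s (t - 1) = L (P ! (i + t - 1))" by simp
      moreover have "s t = c (i + t)" unfolding s_def by simp
      ultimately have "sdiff (Bs u s (t - 1)) {s t} = sdiff (L (P ! (i + t - 1))) {c (i + t)}" by simp
      then show "sdiff (Bs u s (t - 1)) {s t} \<notin> V" using nsq[of "i + t"] t i by simp
    qed
    from core[OF gL_fin[OF gl] gL_iso[OF gl] ch[unfolded V_def]]
    show False
    proof
      assume A: "\<forall>w\<in>L ` verts G. sdiff w u \<subseteq> s ` {..<dd} \<longrightarrow> (\<exists>t\<le>dd. w = Bs u s t)"
      define x where "x = L (P ! (i + dd + 1))"
      have xV: "x \<in> L ` verts G" unfolding x_def using PV i by simp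
      have "x = sdiff (L (P ! (i + dd))) {c (i + dd)}" unfolding x_def using stepL[of "i + dd"] i by simp
      also have "\<dots> = sdiff (Bs u s dd) {s 0}" using BL[of dd] i unfolding s_def by simp
      finally have xe: "x = sdiff (Bs u s dd) {s 0}" .
      have "sdiff x u = sdiff (s ` {..<dd}) {s 0}" unfolding xe Bs_def by auto
      moreover have "s 0 \<in> s ` {..<dd}" using i by simp
      ultimately have "sdiff x u \<subseteq> s ` {..<dd}" by auto
      then obtain t where t: "t \<le> dd" "x = Bs u s t" using A xV by blast
      then have "L (P ! (i + dd + 1)) = L (P ! (i + t))" using BL unfolding x_def by simp
      then have "P ! (i + dd + 1) = P ! (i + t)" using injL PV i t by (auto dest: inj_onD)
      then have "i + dd + 1 = i + t" using dP lP i t by (simp add: nth_eq_iff_index_eq)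
      then show False using t by simp
    next
      assume "\<exists>u' s' m'. CS (L ` verts G) u' s' m'"
      then obtain u' s' m' where "CS (L ` verts G) u' s' m'" by blast
      from CS_convex_cycle[OF gl this] obtain vs where "convex_cycle G vs" "length vs \<noteq> 4" by blast
      then show False using assms(2) by blast
    qed
  qed
  have injc': "inj_on (\<lambda>p. c (0 + p)) {..<l}" using injc by simp
  have BL0: "Bs (L (P ! 0)) (\<lambda>p. c (0 + p)) l = L (P ! (0 + l))"
    by (rule chain_lab[of l L P c, OF stepL injc']) auto
  have "gdist G (P ! 0) (P ! l) = card (sdiff (L (P ! 0)) (L (P ! l)))" using d PV by simp
  also have "\<dots> = card (c ` {..<l})"
  proof -
    have "L (P ! l) = sdiff (L (P ! 0)) (c ` {..<l})" using BL0 unfolding Bs_def by simp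
    then have "sdiff (L (P ! 0)) (L (P ! l)) = c ` {..<l}" by auto
    then show ?thesis by simp
  qed
  also have "\<dots> = l" using injc by (simp add: card_image)
  finally have gd: "gdist G (P ! 0) (P ! l) = l" .
  have Pne: "P \<noteq> []" using lP by auto
  have "hd P = P ! 0" using Pne by (rule hd_conv_nth)
  moreover have "last P = P ! l" using last_conv_nth[OF Pne] lP by simp
  ultimately show ?thesis unfolding shortest_path_def using assms(3) gd l_def by simp
qed

end
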